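(* Let $X$ and $Y$ be discrete random variables taking values in a finite set $\mathcal{A}$ with $|\mathcal{A}|=M\ge 2$, with $d_{\mathrm{TV}}(X,Y)>0$. Assume that for some positive constants $\varepsilon_1,\varepsilon_2$, $$d_{\mathrm{TV}}(X,Y)\le\varepsilon_1\le 1-\frac{1}{M\varepsilon_2},\qquad \frac{d_{\mathrm{loc}}(X,Y)}{d_{\mathrm{TV}}(X,Y)}\le\varepsilon_2\le 1.$$ Then $$|H(X)-H(Y)|\le\varepsilon_1\log(M\varepsilon_2-1)+h(\varepsilon_1).$$
   Context: For discrete random variables $X,Y$ on a set $\mathcal{A}$ with probability mass functions $P_X,P_Y$, the local distance is $d_{\mathrm{loc}}(X,Y) = \sup_{u\in\mathcal{A}} |P_X(u)-P_Y(u)|$ and the total variation distance is $d_{\mathrm{TV}}(X,Y) = \frac12\sum_{u\in\mathcal{A}}|P_X(u)-P_Y(u)|$. All logarithms are natural and entropies are in nats, with $0\log0=0$. $h(x) = -x\log x-(1-x)\log(1-x)$ denotes the binary entropy function. *)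

theory Defs
  imports "HOL-Probability.Probability"
begin

text \<open>Distributions of discrete random variables on a finite alphabet A are
represented by probability mass functions (type pmf) supported in A.\<close>

definition entropy_on :: "'a set \<Rightarrow> 'a pmf \<Rightarrow> real" where
  "entropy_on A p = - (\<Sum>u\<in>A. pmf p u * ln (pmf p u))"

definition d_loc :: "'a set \<Rightarrow> 'a pmf \<Rightarrow> 'a pmf \<Rightarrow> real" where
  "d_loc A p q = (SUP u\<in>A. \<bar>pmf p u - pmf q u\<bar>)"

definition d_TV :: "'a set \<Rightarrow> 'a pmf \<Rightarrow> 'a pmf \<Rightarrow> real" where
  "d_TV A p q = (1/2) * (\<Sum>u\<in>A. \<bar>pmf p u - pmf q u\<bar>)"

definition bin_entropy :: "real \<Rightarrow> real" where
  "bin_entropy x = - x * ln x - (1 - x) * ln (1 - x)"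

end

theory Submission imports Defs begin

lemma ls_term:
  fixes a c S C :: real
  assumes "a \<ge> 0" "c \<ge> 0" "a > 0 \<Longrightarrow> c > 0" "S > 0" "C > 0"
  shows "a * ln (c / a) \<le> a * ln (C / S) + c * S / C - a"
proof (cases "a = 0")
  case True thus ?thesis using assms by simp
next
  case False
  hence a: "a > 0" using assms by simp
  hence c: "c > 0" using assms by simp
  have "ln (c / a) - ln (C / S) = ln ((c * S) / (a * C))"
    using a c assms by (simp add: ln_div ln_mult)
  also have "\<dots> \<le> (c * S) / (a * C) - 1"
    using a c assms by (intro ln_le_minus_one) simp
  finally have "a * (ln (c / a) - ln (C / S)) \<le> a * ((c * S) / (a * C) - 1)"
    using a by (simp add: mult_left_mono)
  thus ?thesis using a by (simp add: algebra_simps)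
qed

lemma log_sum:
  fixes a c :: "'a \<Rightarrow> real"
  assumes "finite A" "\<And>u. u \<in> A \<Longrightarrow> a u \<ge> 0" "\<And>u. u \<in> A \<Longrightarrow> c u \<ge> 0"
    "\<And>u. u \<in> A \<Longrightarrow> a u > 0 \<Longrightarrow> c u > 0"
    "sum a A = S" "sum c A = C" "S > 0" "C > 0"
  shows "(\<Sum>u\<in>A. a u * ln (c u / a u)) \<le> S * ln (C / S)"
proof -
  have "(\<Sum>u\<in>A. a u * ln (c u / a u)) \<le> (\<Sum>u\<in>A. a u * ln (C / S) + c u * S / C - a u)"
    by (intro sum_mono ls_term) (use assms in auto)
  also have "\<dots> = (\<Sum>u\<in>A. a u) * ln (C / S) + (\<Sum>u\<in>A. c u) * S / C - (\<Sum>u\<in>A. a u)"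
    by (simp add: sum.distrib sum_subtractf sum_distrib_right sum_divide_distrib)
  also have "\<dots> = S * ln (C / S)" using assms by simp
  finally show ?thesis .
qed

lemma subadd:
  fixes m d :: real assumes "m \<ge> 0" "d \<ge> 0"
  shows "m * ln m + d * ln d \<le> (m + d) * ln (m + d)"
proof (cases "m = 0 \<or> d = 0")
  case True thus ?thesis using assms by auto
next
  case False
  hence "m > 0" "d > 0" using assms by auto
  hence "ln m \<le> ln (m+d)" "ln d \<le> ln (m+d)" by auto
  hence "m * ln m \<le> m * ln (m+d)" "d * ln d \<le> d * ln (m+d)"
    using \<open>m>0\<close> \<open>d>0\<close> by (auto intro: mult_left_mono)
  thus ?thesis by (simp add: algebra_simps)
qed

lemma split_id:
  fixes a b :: real assumes "a \<ge> 0" "b \<ge> 0"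
  shows "(a + b) * ln (a + b) = a * ln a + b * ln b + a * ln ((a+b)/a) + b * ln ((a+b)/b)"
proof (cases "a = 0 \<or> b = 0")
  case True thus ?thesis using assms by auto
next
  case False
  hence "a > 0" "b > 0" using assms by auto
  thus ?thesis by (simp add: ln_div algebra_simps)
qed

lemma h_mono:
  fixes t e K :: real
  assumes "0 < t" "t \<le> e" "K > 0" "e \<le> K / (K + 1)"
  shows "t * ln K + bin_entropy t \<le> e * ln K + bin_entropy e"
proof -
  have "K / (K + 1) < 1" using assms by simp
  hence e1: "e < 1" using assms by linarith
  have ep: "e > 0" using assms by simp
  have t1: "t < 1" using assms e1 by simp
  have A: "t * ln (e / t) \<le> e - t"
  proof -
    have "ln (e/t) \<le> e/t - 1" using assms by (intro ln_le_minus_one) simp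
    hence "t * ln (e/t) \<le> t * (e/t - 1)" using assms by (simp add: mult_left_mono)
    thus ?thesis using assms by (simp add: algebra_simps)
  qed
  have B: "(1-t) * ln ((1-e) / (1-t)) \<le> t - e"
  proof -
    have "ln ((1-e)/(1-t)) \<le> (1-e)/(1-t) - 1" using e1 t1 by (intro ln_le_minus_one) simp
    hence "(1-t) * ln ((1-e)/(1-t)) \<le> (1-t) * ((1-e)/(1-t) - 1)" using t1 by (simp add: mult_left_mono)
    also have "(1-t) * ((1-e)/(1-t) - 1) = t - e" using t1 by (simp add: field_simps)
    finally show ?thesis .
  qed
  have C: "0 \<le> ln (K * (1 - e) / e)"
    using assms ep e1 by (intro ln_ge_zero) (simp add: field_simps)
  have C': "ln (K * (1 - e) / e) = ln K + ln (1-e) - ln e"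
    using assms ep e1 by (simp add: ln_div ln_mult)
  have D: "(t - e) * ln (K * (1 - e) / e) \<le> 0"
    using C assms by (simp add: mult_nonpos_nonneg)
  have D': "(t - e) * (ln K + ln (1-e) - ln e) \<le> 0" using D C' by simp
  have "t * ln (e / t) = t * ln e - t * ln t" using assms ep by (simp add: ln_div algebra_simps)
  hence A': "t * ln e - t * ln t \<le> e - t" using A by simp
  have "(1-t) * ln ((1-e) / (1-t)) = (1-t) * ln (1-e) - (1-t) * ln (1-t)"
    using e1 t1 by (simp add: ln_div algebra_simps)
  hence B': "(1-t) * ln (1-e) - (1-t) * ln (1-t) \<le> t - e" using B by simp
  show ?thesis using A' B' D' unfolding bin_entropy_def
    by (simp add: algebra_simps)
qed

lemma core:
  fixes p q :: "'a \<Rightarrow> real" and \<theta> \<eta> :: real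
  assumes fin: "finite A" and p0: "\<And>u. u \<in> A \<Longrightarrow> p u \<ge> 0" and q0: "\<And>u. u \<in> A \<Longrightarrow> q u \<ge> 0"
    and sp: "sum p A = 1" and sq: "sum q A = 1"
    and th: "\<theta> = (1/2) * (\<Sum>u\<in>A. \<bar>p u - q u\<bar>)" and th0: "0 < \<theta>" and th1: "\<theta> < 1"
    and eta: "\<And>u. u \<in> A \<Longrightarrow> \<bar>p u - q u\<bar> \<le> \<eta>" and eta0: "\<eta> > 0"
  shows "(\<Sum>u\<in>A. q u * ln (q u)) - (\<Sum>u\<in>A. p u * ln (p u))
          \<le> \<theta> * ln (real (card A) * \<eta> / \<theta> - 1) + bin_entropy \<theta>"
proof -
  define m where "m u = min (p u) (q u)" for u
  define d where "d u = p u - m u" for u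
  define e where "e u = q u - m u" for u
  have m0: "m u \<ge> 0" if "u \<in> A" for u using p0[OF that] q0[OF that] by (simp add: m_def)
  have d0: "d u \<ge> 0" for u by (simp add: d_def m_def)
  have e0: "e u \<ge> 0" for u by (simp add: e_def m_def)
  have pd: "p u = m u + d u" for u by (simp add: d_def)
  have qe: "q u = m u + e u" for u by (simp add: e_def)
  have absd: "\<bar>p u - q u\<bar> = d u + e u" for u by (simp add: d_def e_def m_def)
  have de: "d u = 0 \<or> e u = 0" for u by (simp add: d_def e_def m_def min_def)
  have "sum p A = sum m A + sum d A" by (simp add: pd sum.distrib)
  moreover have "sum q A = sum m A + sum e A" by (simp add: qe sum.distrib)
  moreover have "2 * \<theta> = sum d A + sum e A" using th by (simp add: absd sum.distrib)
  ultimately have sd: "sum d A = \<theta>" and se: "sum e A = \<theta>" and sm: "sum m A = 1 - \<theta>"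
    using sp sq by linarith+
  have S1: "(\<Sum>u\<in>A. m u * ln (m u)) + (\<Sum>u\<in>A. d u * ln (d u)) \<le> (\<Sum>u\<in>A. p u * ln (p u))"
    unfolding sum.distrib[symmetric] by (rule sum_mono) (simp add: pd subadd m0 d0)
  have S2: "(\<Sum>u\<in>A. q u * ln (q u)) = (\<Sum>u\<in>A. m u * ln (m u)) + (\<Sum>u\<in>A. e u * ln (e u))
     + (\<Sum>u\<in>A. m u * ln (q u / m u)) + (\<Sum>u\<in>A. e u * ln (q u / e u))"
    unfolding sum.distrib[symmetric] by (rule sum.cong) (simp_all add: qe split_id m0 e0)
  have LS1: "(\<Sum>u\<in>A. m u * ln (q u / m u)) \<le> (1 - \<theta>) * ln (1 / (1 - \<theta>))"
    by (rule log_sum) (use fin m0 q0 sm sq th1 e0 qe in \<open>auto intro: add_pos_nonneg\<close>)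
  have LS2: "(\<Sum>u\<in>A. e u * ln (q u / e u)) \<le> \<theta> * ln (1 / \<theta>)"
    by (rule log_sum) (use fin e0 q0 se sq th0 m0 qe in \<open>auto intro: add_nonneg_pos\<close>)
  have hb: "bin_entropy \<theta> = \<theta> * ln (1 / \<theta>) + (1 - \<theta>) * ln (1 / (1 - \<theta>))"
    unfolding bin_entropy_def using th0 th1 by (simp add: ln_div)
  define P where "P = {u\<in>A. d u > 0}"
  define N where "N = {u\<in>A. e u > 0}"
  have finP: "finite P" "finite N" using fin by (auto simp: P_def N_def)
  have "\<exists>u\<in>A. d u > 0"
  proof (rule ccontr)
    assume "\<not> ?thesis"
    hence "sum d A \<le> 0" by (intro sum_nonpos) auto
    thus False using sd th0 by simp
  qed
  hence Pne: "P \<noteq> {}" by (auto simp: P_def)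
  hence cP: "card P > 0" using finP by (simp add: card_gt_0_iff)
  have cPs: "(\<Sum>u\<in>A. if d u > 0 then 1 else (0::real)) = real (card P)"
    using fin by (simp add: P_def sum.inter_filter[symmetric])
  have LS3: "(\<Sum>u\<in>A. d u * ln ((if d u > 0 then 1 else 0) / d u)) \<le> \<theta> * ln (real (card P) / \<theta>)"
    by (rule log_sum) (use fin d0 sd th0 cPs cP in auto)
  have "(\<Sum>u\<in>A. d u * ln ((if d u > 0 then 1 else 0) / d u)) = - (\<Sum>u\<in>A. d u * ln (d u))"
    unfolding sum_negf[symmetric] by (rule sum.cong) (use d0 in \<open>auto simp: ln_div order_le_less\<close>)
  hence S3: "- (\<Sum>u\<in>A. d u * ln (d u)) \<le> \<theta> * ln (real (card P) / \<theta>)" using LS3 by simp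
  have "(\<Sum>u\<in>A. e u * ln (e u)) \<le> (\<Sum>u\<in>A. e u * ln \<eta>)"
  proof (rule sum_mono)
    fix u assume u: "u \<in> A"
    show "e u * ln (e u) \<le> e u * ln \<eta>"
    proof (cases "e u = 0")
      case False
      hence "e u > 0" using e0[of u] by linarith
      moreover have "e u \<le> \<eta>" using eta[OF u] absd[of u] d0[of u] by simp
      ultimately show ?thesis by (intro mult_left_mono) auto
    qed simp
  qed
  also have "\<dots> = \<theta> * ln \<eta>" using se by (simp add: sum_distrib_right[symmetric])
  finally have S4: "(\<Sum>u\<in>A. e u * ln (e u)) \<le> \<theta> * ln \<eta>" .
  have main: "(\<Sum>u\<in>A. q u * ln (q u)) - (\<Sum>u\<in>A. p u * ln (p u))
       \<le> \<theta> * ln (real (card P) / \<theta>) + \<theta> * ln \<eta> + bin_entropy \<theta>"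
    using S1 S2 LS1 LS2 hb S3 S4 by linarith
  have "\<theta> * ln (real (card P) / \<theta>) + \<theta> * ln \<eta> = \<theta> * ln (real (card P) * \<eta> / \<theta>)"
    using cP th0 eta0 by (simp add: ln_div ln_mult algebra_simps)
  also have "\<dots> \<le> \<theta> * ln (real (card A) * \<eta> / \<theta> - 1)"
  proof -
    have "sum e A = sum e N" using fin unfolding N_def
      by (simp add: sum.inter_filter) (metis (no_types, lifting) e0 order_le_less sum.cong)
    also have "\<dots> \<le> real (card N) * \<eta>"
    proof (rule sum_bounded_above)
      fix u assume "u \<in> N"
      hence "u \<in> A" by (simp add: N_def)
      thus "e u \<le> \<eta>" using eta[of u] absd[of u] d0[of u] by linarith
    qed
    finally have cN: "\<theta> \<le> real (card N) * \<eta>" using se by simp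
    have "P \<inter> N = {}" unfolding P_def N_def using de by (metis (mono_tags, lifting) disjoint_iff less_irrefl mem_Collect_eq)
    hence "card P + card N = card (P \<union> N)" using finP by (simp add: card_Un_disjoint)
    also have "\<dots> \<le> card A" using fin by (intro card_mono) (auto simp: P_def N_def)
    finally have "real (card P) \<le> real (card A) - real (card N)" by linarith
    hence "real (card P) * \<eta> \<le> real (card A) * \<eta> - real (card N) * \<eta>"
      using eta0 by (simp add: mult_right_mono left_diff_distrib[symmetric])
    hence "real (card P) * \<eta> \<le> real (card A) * \<eta> - \<theta>" using cN by linarith
    hence le: "real (card P) * \<eta> / \<theta> \<le> real (card A) * \<eta> / \<theta> - 1"
      using th0 by (simp add: field_simps)
    have pos: "real (card P) * \<eta> / \<theta> > 0" using cP eta0 th0 by simp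
    have "ln (real (card P) * \<eta> / \<theta>) \<le> ln (real (card A) * \<eta> / \<theta> - 1)"
      using le pos by simp
    thus ?thesis using th0 by (simp add: mult_left_mono)
  qed
  finally show ?thesis using main by linarith
qed

theorem corollary2:
  fixes A :: "'a set" and X Y :: "'a pmf" and M :: nat and \<epsilon>1 \<epsilon>2 :: real
  assumes "finite A" and "card A = M" and "M \<ge> 2"
    and "set_pmf X \<subseteq> A" and "set_pmf Y \<subseteq> A"
    and "d_TV A X Y > 0"
    and "\<epsilon>1 > 0" and "\<epsilon>2 > 0"
    and "d_TV A X Y \<le> \<epsilon>1" and "\<epsilon>1 \<le> 1 - 1 / (real M * \<epsilon>2)"
    and "d_loc A X Y / d_TV A X Y \<le> \<epsilon>2" and "\<epsilon>2 \<le> 1"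
  shows "\<bar>entropy_on A X - entropy_on A Y\<bar>
           \<le> \<epsilon>1 * ln (real M * \<epsilon>2 - 1) + bin_entropy \<epsilon>1"
proof -
  note fin = assms(1)
  define \<theta> where "\<theta> = d_TV A X Y"
  define \<eta> where "\<eta> = d_loc A X Y"
  have th0: "\<theta> > 0" using assms by (simp add: \<theta>_def)
  have Mpos: "real M * \<epsilon>2 > 0" using assms by simp
  have "1 / (real M * \<epsilon>2) > 0" using Mpos by simp
  hence th1: "\<theta> < 1" using assms unfolding \<theta>_def by linarith
  have bdd: "bdd_above ((\<lambda>u. \<bar>pmf X u - pmf Y u\<bar>) ` A)" using fin by (simp add: bdd_above_finite)
  have eta: "\<bar>pmf X u - pmf Y u\<bar> \<le> \<eta>" if "u \<in> A" for u
    unfolding \<eta>_def d_loc_def by (rule cSUP_upper[OF that bdd])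
  have "\<exists>u\<in>A. \<bar>pmf X u - pmf Y u\<bar> > 0"
  proof (rule ccontr)
    assume "\<not> ?thesis"
    hence "(\<Sum>u\<in>A. \<bar>pmf X u - pmf Y u\<bar>) \<le> 0" by (intro sum_nonpos) auto
    thus False using th0 by (simp add: \<theta>_def d_TV_def)
  qed
  then obtain u0 where "u0 \<in> A" "\<bar>pmf X u0 - pmf Y u0\<bar> > 0" by blast
  hence eta0: "\<eta> > 0" using eta by (meson less_le_trans)
  have thform: "\<theta> = (1/2) * (\<Sum>u\<in>A. \<bar>pmf X u - pmf Y u\<bar>)" by (simp add: \<theta>_def d_TV_def)
  have thform': "\<theta> = (1/2) * (\<Sum>u\<in>A. \<bar>pmf Y u - pmf X u\<bar>)" by (simp add: thform abs_minus_commute)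
  have sX: "sum (pmf X) A = 1" and sY: "sum (pmf Y) A = 1" using assms by (auto intro: sum_pmf_eq_1)
  have C1: "entropy_on A Y - entropy_on A X \<le> \<theta> * ln (real M * \<eta> / \<theta> - 1) + bin_entropy \<theta>"
    using core[OF fin _ _ sY sX thform' th0 th1 _ eta0] eta assms(2)
    unfolding entropy_on_def by (simp add: abs_minus_commute)
  have C2: "entropy_on A X - entropy_on A Y \<le> \<theta> * ln (real M * \<eta> / \<theta> - 1) + bin_entropy \<theta>"
    using core[OF fin _ _ sX sY thform th0 th1 _ eta0] eta assms(2)
    unfolding entropy_on_def by simp
  have "(\<Sum>u\<in>A. \<bar>pmf X u - pmf Y u\<bar>) \<le> real (card A) * \<eta>"
    by (rule sum_bounded_above) (rule eta)
  hence two: "2 \<le> real M * \<eta> / \<theta>" using th0 thform assms(2) by (simp add: field_simps)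
  have "\<eta> / \<theta> \<le> \<epsilon>2" using assms by (simp add: \<theta>_def \<eta>_def)
  hence le: "real M * \<eta> / \<theta> \<le> real M * \<epsilon>2"
    using mult_left_mono[of "\<eta> / \<theta>" \<epsilon>2 "real M"] by simp
  have "ln (real M * \<eta> / \<theta> - 1) \<le> ln (real M * \<epsilon>2 - 1)" using two le by simp
  hence st1: "\<theta> * ln (real M * \<eta> / \<theta> - 1) \<le> \<theta> * ln (real M * \<epsilon>2 - 1)"
    using th0 by (simp add: mult_left_mono)
  have K: "real M * \<epsilon>2 - 1 > 0" using two le by linarith
  have "(real M * \<epsilon>2 - 1) / (real M * \<epsilon>2 - 1 + 1) = 1 - 1 / (real M * \<epsilon>2)"
    using Mpos assms(3,8) by (simp add: diff_divide_distrib)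
  hence st2: "\<theta> * ln (real M * \<epsilon>2 - 1) + bin_entropy \<theta> \<le> \<epsilon>1 * ln (real M * \<epsilon>2 - 1) + bin_entropy \<epsilon>1"
    using h_mono[OF th0 _ K] assms by (simp add: \<theta>_def)
  show ?thesis using C1 C2 st1 st2 by linarith
qed

end
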